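(* For every $A\subseteq[n]$ one has (i) $[\Gamma_A,\underline{D}]=[\Gamma_A,\underline{x}]=0$, and (ii) $[\Gamma_A,\Gamma_{[n]}]=0$, as operators on $\mathcal{P}(\mathbb{R}^n)\otimes V$.
   Context: Fix $n\ge1$ and real parameters $\mu_1,\dots,\mu_n>0$; write $[n]=\{1,\dots,n\}$. For $i\in[n]$, $r_i$ is the reflection $(r_if)(x)=f(x_1,\dots,-x_i,\dots,x_n)$ and $T_i=\partial_{x_i}+\frac{\mu_i}{x_i}(1-r_i)$. $\mathcal{C}\ell_n$ is generated by $e_1,\dots,e_n$ with $e_ie_j+e_je_i=-2\delta_{ij}$, $V$ is a fixed left $\mathcal{C}\ell_n$-module, and operators act on $\mathcal{P}(\mathbb{R}^n)\otimes V$ with $x_i,T_i,r_i$ acting on the polynomial factor and $e_i$ on $V$. For $A\subseteq[n]$: $\underline{D}_A=\sum_{i\in A}e_iT_i$, $\underline{x}_A=\sum_{i\in A}e_ix_i$, $\underline{S}_A=\frac12([\underline{x}_A,\underline{D}_A]-1)$, $\Gamma_A=\underline{S}_A\prod_{i\in A}r_i$ (empty sums $0$, empty products $1$); $\underline{D}=\underline{D}_{[n]}$, $\underline{x}=\underline{x}_{[n]}$. *)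

theory Defs
  imports Complex_Main "HOL-Library.Function_Algebras"
begin

text \<open>
  Elements of P(R^n) (x) V are represented by their coefficient functions:
  F :: (nat => nat) => 'v, where F alpha is the V-coefficient of the monomial
  x^alpha = prod_i x_i^(alpha i).  Variables are indexed by 1..n.
\<close>

type_synonym 'v pv = "(nat \<Rightarrow> nat) \<Rightarrow> 'v"
type_synonym 'v pvop = "'v pv \<Rightarrow> 'v pv"

definition is_pv :: "nat \<Rightarrow> ('v::zero) pv \<Rightarrow> bool" where
  "is_pv n F \<longleftrightarrow> finite {a. F a \<noteq> 0} \<and>
     (\<forall>a. F a \<noteq> 0 \<longrightarrow> (\<forall>i. a i \<noteq> 0 \<longrightarrow> i \<in> {1..n}))"

text \<open>multiplication by x_i\<close>
definition mulx :: "nat \<Rightarrow> ('v::zero) pvop" where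
  "mulx i F = (\<lambda>a. if a i > 0 then F (a(i := a i - 1)) else 0)"

text \<open>reflection r_i: (r_i f)(x) = f(x_1,..,-x_i,..,x_n)\<close>
definition refl :: "nat \<Rightarrow> ('v::real_vector) pvop" where
  "refl i F = (\<lambda>a. ((-1::real) ^ a i) *\<^sub>R F a)"

text \<open>product of the reflections r_i, i in A (they commute)\<close>
definition reflA :: "nat set \<Rightarrow> ('v::real_vector) pvop" where
  "reflA A F = (\<lambda>a. ((-1::real) ^ (\<Sum>i\<in>A. a i)) *\<^sub>R F a)"

text \<open>partial derivative d/dx_i\<close>
definition pd :: "nat \<Rightarrow> ('v::real_vector) pvop" where
  "pd i F = (\<lambda>a. real (a i + 1) *\<^sub>R F (a(i := a i + 1)))"

text \<open>divided difference (1 - r_i)/x_i (well defined on polynomials)\<close>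
definition divdiff :: "nat \<Rightarrow> ('v::real_vector) pvop" where
  "divdiff i F = (\<lambda>a. (1 - (-1::real) ^ (a i + 1)) *\<^sub>R F (a(i := a i + 1)))"

definition dunkl :: "(nat \<Rightarrow> real) \<Rightarrow> nat \<Rightarrow> ('v::real_vector) pvop" where
  "dunkl mu i F = (\<lambda>a. pd i F a + mu i *\<^sub>R divdiff i F a)"

definition cl :: "(nat \<Rightarrow> 'v \<Rightarrow> 'v) \<Rightarrow> nat \<Rightarrow> 'v pvop" where
  "cl e i F = (\<lambda>a. e i (F a))"

definition DA :: "(nat \<Rightarrow> 'v \<Rightarrow> 'v) \<Rightarrow> (nat \<Rightarrow> real) \<Rightarrow> nat set \<Rightarrow> ('v::real_vector) pvop" where
  "DA e mu A F = (\<lambda>a. \<Sum>i\<in>A. cl e i (dunkl mu i F) a)"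

definition XA :: "(nat \<Rightarrow> 'v \<Rightarrow> 'v) \<Rightarrow> nat set \<Rightarrow> ('v::real_vector) pvop" where
  "XA e A F = (\<lambda>a. \<Sum>i\<in>A. cl e i (mulx i F) a)"

definition commut :: "('v::ab_group_add) pvop \<Rightarrow> 'v pvop \<Rightarrow> 'v pvop" where
  "commut P Q F = (\<lambda>a. P (Q F) a - Q (P F) a)"

definition SA :: "(nat \<Rightarrow> 'v \<Rightarrow> 'v) \<Rightarrow> (nat \<Rightarrow> real) \<Rightarrow> nat set \<Rightarrow> ('v::real_vector) pvop" where
  "SA e mu A F = (\<lambda>a. (1/2::real) *\<^sub>R (commut (XA e A) (DA e mu A) F a - F a))"

definition GammaA :: "(nat \<Rightarrow> 'v \<Rightarrow> 'v) \<Rightarrow> (nat \<Rightarrow> real) \<Rightarrow> nat set \<Rightarrow> ('v::real_vector) pvop" where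
  "GammaA e mu A F = SA e mu A (reflA A F)"

definition clifford_module :: "nat \<Rightarrow> (nat \<Rightarrow> 'v::real_vector \<Rightarrow> 'v) \<Rightarrow> bool" where
  "clifford_module n e \<longleftrightarrow> (\<forall>i\<in>{1..n}. linear (e i)) \<and>
     (\<forall>i\<in>{1..n}. \<forall>j\<in>{1..n}. \<forall>v. e i (e j v) + e j (e i v) =
        (if i = j then - 2 *\<^sub>R v else 0))"

end

theory Submission
  imports Defs
begin


definition kd :: "(nat \<Rightarrow> real) \<Rightarrow> nat \<Rightarrow> nat \<Rightarrow> real" where
  "kd mu i m = real (m + 1) + mu i * (1 - (-1) ^ (m + 1))"

lemma dunkl_alt: "dunkl mu i F = (\<lambda>a. kd mu i (a i) *\<^sub>R F (a(i := a i + 1)))"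
  by (simp add: dunkl_def pd_def divdiff_def kd_def fun_eq_iff scaleR_add_left scaleR_add_right distrib_left)

definition sc :: "real \<Rightarrow> ('v::real_vector) pv \<Rightarrow> 'v pv" where
  "sc c F = (\<lambda>a. c *\<^sub>R F a)"

lemma sum_fun_apply: "(sum f S) a = (\<Sum>i\<in>S. f i a)"
  by (induct S rule: infinite_finite_induct) auto

lemma C1: "mulx i (mulx j F) = mulx j (mulx i F)"
  by (cases "i = j") (auto simp: mulx_def fun_eq_iff fun_upd_twist)

lemma C2: "dunkl mu i (dunkl mu j F) = dunkl mu j (dunkl mu i (F::'v::real_vector pv))"
  by (cases "i = j") (auto simp: dunkl_alt fun_eq_iff fun_upd_twist)

lemma C3: "dunkl mu i (mulx j F) = mulx j (dunkl mu i F)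
   + (if i = j then F + sc (2 * mu i) (refl i F) else 0)"
proof (cases "i = j")
  case False thus ?thesis by (auto simp: dunkl_alt mulx_def fun_eq_iff fun_upd_twist)
next
  case True
  show ?thesis
  proof (rule ext)
    fix a
    show "dunkl mu i (mulx j F) a = (mulx j (dunkl mu i F)
       + (if i = j then F + sc (2 * mu i) (refl i F) else 0)) a"
    proof (cases "a i")
      case 0 thus ?thesis using True
        by (simp add: dunkl_alt mulx_def sc_def refl_def kd_def algebra_simps)
           (metis scaleR_2 scaleR_scaleR scaleR_add_right mult.commute)
    next
      case (Suc m)
      have aa: "a(j := Suc m) = a" using Suc True by auto
      have "dunkl mu i (mulx j F) a - mulx j (dunkl mu i F) a = F a + sc (2 * mu i) (refl i F) a"
        using True Suc by (simp add: dunkl_alt mulx_def sc_def refl_def kd_def aa algebra_simps)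
             (simp add: scaleR_add_left[symmetric])
      then show ?thesis using True by (simp add: algebra_simps)
    qed
  qed
qed

lemma C4: "refl i (mulx j F) = (if i = j then - mulx j (refl i F) else mulx j (refl i F))"
  by (cases "i = j") (auto simp: refl_def mulx_def fun_eq_iff gr0_conv_Suc)

lemma C5: "refl i (dunkl mu j F) = (if i = j then - dunkl mu j (refl i F) else dunkl mu j (refl i F))"
  by (cases "i = j") (auto simp: refl_def dunkl_alt fun_eq_iff)




lemma sum_upd_in: "finite S \<Longrightarrow> j \<in> S \<Longrightarrow> (\<Sum>i\<in>S. (a(j := m)) i) = m + (\<Sum>i\<in>S-{j}. a i)"
  by (simp add: sum.remove)
lemma sum_upd_out: "j \<notin> S \<Longrightarrow> (\<Sum>i\<in>S. (a(j := m)) i) = (\<Sum>i\<in>S. a i)"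
  by (rule sum.cong) auto
lemma sum_upd_out': "j \<notin> S \<Longrightarrow> (\<Sum>i\<in>S. if i = j then m else a i) = (\<Sum>i\<in>S. a i)"
  by (rule sum.cong) auto
lemma sum_in: "finite S \<Longrightarrow> j \<in> S \<Longrightarrow> (\<Sum>i\<in>S. a i) = a j + (\<Sum>i\<in>S-{j}. a i)"
  by (simp add: sum.remove)

lemma RA_X: "finite S \<Longrightarrow> reflA S (mulx j F) = (if j \<in> S then - mulx j (reflA S F) else mulx j (reflA S F))"
  by (auto simp: reflA_def mulx_def fun_eq_iff gr0_conv_Suc sum_upd_in sum_upd_out sum_upd_out' sum_in[of S j])

lemma RA_T: "finite S \<Longrightarrow> reflA S (dunkl mu j F) = (if j \<in> S then - dunkl mu j (reflA S F) else dunkl mu j (reflA S F))"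
  by (auto simp: reflA_def dunkl_alt fun_eq_iff sum_upd_in sum_upd_out sum_upd_out' sum_in[of S j])

lemma RA_RA: "reflA S (reflA S' F) = reflA S' (reflA S F)"
  by (simp add: reflA_def fun_eq_iff)

lemma X_f: "linear f \<Longrightarrow> mulx i (\<lambda>a. f (F a)) = (\<lambda>a. f (mulx i F a))"
  by (auto simp: mulx_def fun_eq_iff linear_0)
lemma T_f: "linear f \<Longrightarrow> dunkl mu i (\<lambda>a. f (F a)) = (\<lambda>a. f (dunkl mu i F a))"
  by (auto simp: dunkl_alt fun_eq_iff linear_scale)
lemma R_f: "linear f \<Longrightarrow> refl i (\<lambda>a. f (F a)) = (\<lambda>a. f (refl i F a))"
  by (auto simp: refl_def fun_eq_iff linear_scale)
lemma RA_f: "linear f \<Longrightarrow> reflA S (\<lambda>a. f (F a)) = (\<lambda>a. f (reflA S F a))"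
  by (auto simp: reflA_def fun_eq_iff linear_scale)

definition lin :: "('v::real_vector) pvop \<Rightarrow> bool" where
  "lin P \<longleftrightarrow> (\<forall>F G. P (F + G) = P F + P G) \<and> (\<forall>c F. P (sc c F) = sc c (P F))"

lemma lin_add: "lin P \<Longrightarrow> P (F + G) = P F + P G" by (simp add: lin_def)
lemma lin_sc: "lin P \<Longrightarrow> P (sc c F) = sc c (P F)" by (simp add: lin_def)
lemma lin_zero: "lin P \<Longrightarrow> P 0 = 0"
  using lin_add[of P 0 0] by simp
lemma lin_neg: "lin P \<Longrightarrow> P (- F) = - P F"
proof -
  assume "lin P"
  then have "P F + P (- F) = 0" using lin_add[of P F "-F"] lin_zero[of P] by simp
  thus ?thesis by (metis add.inverse_unique)
qed
lemma lin_diff: "lin P \<Longrightarrow> P (F - G) = P F - P G"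
  using lin_add[of P F "-G"] lin_neg[of P G] by simp
lemma lin_sum: "lin P \<Longrightarrow> P (sum f S) = (\<Sum>k\<in>S. P (f k))"
  by (induct S rule: infinite_finite_induct) (auto simp: lin_zero lin_add)

lemma lin_X: "lin (mulx i)" by (auto simp: lin_def mulx_def sc_def fun_eq_iff)
lemma lin_T: "lin (dunkl mu i)" by (auto simp: lin_def dunkl_alt sc_def fun_eq_iff algebra_simps)
lemma lin_R: "lin (refl i)" by (auto simp: lin_def refl_def sc_def fun_eq_iff algebra_simps)
lemma lin_RA: "lin (reflA S)" by (auto simp: lin_def reflA_def sc_def fun_eq_iff algebra_simps)
lemma lin_f: "linear f \<Longrightarrow> lin (\<lambda>F a. f (F a))"
  by (auto simp: lin_def sc_def fun_eq_iff linear_add linear_scale)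
lemma lin_comp: "lin P \<Longrightarrow> lin Q \<Longrightarrow> lin (\<lambda>F. P (Q F))"
  by (simp add: lin_def)
lemma lin_sumop: "(\<And>k. k \<in> S \<Longrightarrow> lin (P k)) \<Longrightarrow> lin (\<lambda>F. \<Sum>k\<in>S. P k F)"
  by (auto simp: lin_def sum.distrib sc_def fun_eq_iff sum_fun_apply scaleR_sum_right)
lemma lin_diffop: "lin P \<Longrightarrow> lin Q \<Longrightarrow> lin (\<lambda>F. P F - Q F)"
  by (auto simp: lin_def sc_def fun_eq_iff algebra_simps)
lemma lin_scop: "lin P \<Longrightarrow> lin (\<lambda>F. sc c (P F))"
  by (auto simp: lin_def sc_def fun_eq_iff algebra_simps)
lemma lin_id: "lin (\<lambda>F. F)" by (simp add: lin_def)

lemma sc_add: "sc c (F + G) = sc c F + sc c G" by (simp add: sc_def fun_eq_iff algebra_simps)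
lemma sc_diff: "sc c (F - G) = sc c F - sc c G" by (simp add: sc_def fun_eq_iff algebra_simps)
lemma sc_sum: "sc c (sum f S) = (\<Sum>k\<in>S. sc c (f k))"
  by (simp add: sc_def fun_eq_iff sum_fun_apply scaleR_sum_right)

lemma DA_sum: "DA e mu S F = (\<Sum>i\<in>S. cl e i (dunkl mu i F))"
  by (simp add: DA_def fun_eq_iff sum_fun_apply)
lemma XA_sum: "XA e S F = (\<Sum>i\<in>S. cl e i (mulx i F))"
  by (simp add: XA_def fun_eq_iff sum_fun_apply)
lemma SA_alt: "SA e mu S F = sc (1/2) (XA e S (DA e mu S F) - DA e mu S (XA e S F) - F)"
  by (simp add: SA_def sc_def commut_def fun_eq_iff)




locale cliff =
  fixes n :: nat and e :: "nat \<Rightarrow> 'v::real_vector \<Rightarrow> 'v"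
  assumes cm: "clifford_module n e"
begin

lemma e_lin: "i \<in> {1..n} \<Longrightarrow> linear (e i)"
  using cm by (simp add: clifford_module_def)
lemma e_rel: "i \<in> {1..n} \<Longrightarrow> j \<in> {1..n} \<Longrightarrow> e i (e j v) + e j (e i v) = (if i = j then - 2 *\<^sub>R v else 0)"
  using cm unfolding clifford_module_def by blast

lemma cl_alt: "cl e i F = (\<lambda>a. e i (F a))" by (simp add: cl_def)

lemma lin_E: "i \<in> {1..n} \<Longrightarrow> lin (cl e i)"
  unfolding cl_alt using lin_f[OF e_lin] by simp

lemma E_X: "i \<in> {1..n} \<Longrightarrow> mulx j (cl e i F) = cl e i (mulx j F)"
  unfolding cl_alt by (rule X_f[OF e_lin])
lemma E_T: "i \<in> {1..n} \<Longrightarrow> dunkl mu j (cl e i F) = cl e i (dunkl mu j F)"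
  unfolding cl_alt by (rule T_f[OF e_lin])
lemma E_RA: "i \<in> {1..n} \<Longrightarrow> reflA S (cl e i F) = cl e i (reflA S F)"
  unfolding cl_alt by (rule RA_f[OF e_lin])

lemma lin_DA: "S \<subseteq> {1..n} \<Longrightarrow> lin (DA e mu S)"
proof -
  assume S: "S \<subseteq> {1..n}"
  have E: "\<And>i. i \<in> S \<Longrightarrow> lin (\<lambda>F. cl e i (dunkl mu i F))"
    using S by (intro lin_comp[OF lin_E lin_T]) auto
  have "lin (\<lambda>F. \<Sum>i\<in>S. cl e i (dunkl mu i F))"
    by (rule lin_sumop[OF E])
  thus ?thesis by (simp add: DA_sum[abs_def])
qed
lemma lin_XA: "S \<subseteq> {1..n} \<Longrightarrow> lin (XA e S)"
proof -
  assume S: "S \<subseteq> {1..n}"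
  have E: "\<And>i. i \<in> S \<Longrightarrow> lin (\<lambda>F. cl e i (mulx i F))"
    using S by (intro lin_comp[OF lin_E lin_X]) auto
  have "lin (\<lambda>F. \<Sum>i\<in>S. cl e i (mulx i F))"
    by (rule lin_sumop[OF E])
  thus ?thesis by (simp add: XA_sum[abs_def])
qed
lemma lin_SA: "S \<subseteq> {1..n} \<Longrightarrow> lin (SA e mu S)"
proof -
  assume S: "S \<subseteq> {1..n}"
  note D = lin_DA[OF S, of mu] and X = lin_XA[OF S]
  show ?thesis unfolding lin_def
  proof (intro conjI allI)
    fix F G
    show "SA e mu S (F + G) = SA e mu S F + SA e mu S G"
      by (simp add: SA_alt lin_add[OF D] lin_add[OF X] fun_eq_iff sc_def algebra_simps)
  next
    fix c F
    show "SA e mu S (sc c F) = sc c (SA e mu S F)"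
      by (simp add: SA_alt lin_sc[OF D] lin_sc[OF X] lin_diff[OF D] lin_diff[OF X])
         (simp add: fun_eq_iff sc_def algebra_simps)
  qed
qed
lemma lin_G: "S \<subseteq> {1..n} \<Longrightarrow> lin (GammaA e mu S)"
proof -
  assume S: "S \<subseteq> {1..n}"
  have "lin (\<lambda>F. SA e mu S (reflA S F))" by (rule lin_comp[OF lin_SA[OF S] lin_RA])
  thus ?thesis by (simp add: GammaA_def[abs_def])
qed

lemma clif_sym:
  assumes S: "S \<subseteq> {1..n}" and sym: "\<And>k j. k \<in> S \<Longrightarrow> j \<in> S \<Longrightarrow> G k j = G j k"
  shows "(\<Sum>k\<in>S. \<Sum>j\<in>S. e k (e j (G k j))) = - (\<Sum>k\<in>S. G k k)"
proof -
  have fin: "finite S" using S finite_subset by blast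
  define Q where "Q = (\<Sum>k\<in>S. \<Sum>j\<in>S. e k (e j (G k j)))"
  have 1: "Q = (\<Sum>k\<in>S. \<Sum>j\<in>S. e j (e k (G k j)))"
    unfolding Q_def by (subst sum.swap) (intro sum.cong refl, simp add: sym)
  have "Q + Q = (\<Sum>k\<in>S. \<Sum>j\<in>S. e k (e j (G k j)) + e j (e k (G k j)))"
    by (subst (2) 1) (simp add: Q_def sum.distrib)
  also have "\<dots> = (\<Sum>k\<in>S. \<Sum>j\<in>S. if k = j then - 2 *\<^sub>R G k j else 0)"
  proof (intro sum.cong refl)
    fix k j assume "k \<in> S" "j \<in> S"
    hence "k \<in> {1..n}" "j \<in> {1..n}" using S by auto
    thus "e k (e j (G k j)) + e j (e k (G k j)) = (if k = j then - 2 *\<^sub>R G k j else 0)"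
      by (rule e_rel)
  qed
  also have "\<dots> = (\<Sum>k\<in>S. - 2 *\<^sub>R G k k)"
    using fin by (simp add: sum.delta)
  also have "\<dots> = (- 2) *\<^sub>R (\<Sum>k\<in>S. G k k)"
    by (simp add: scaleR_sum_right)
  finally have h: "Q + Q = (- 2) *\<^sub>R (\<Sum>k\<in>S. G k k)" .
  have "Q = (1/2) *\<^sub>R (Q + Q)" by (simp add: scaleR_2[symmetric])
  also have "\<dots> = - (\<Sum>k\<in>S. G k k)" by (simp add: h)
  finally show ?thesis unfolding Q_def .
qed

lemma clif_anti:
  assumes S: "S \<subseteq> {1..n}" and B: "B \<subseteq> {1..n}" and d: "S \<inter> B = {}"
  shows "(\<Sum>i\<in>S. \<Sum>k\<in>B. e i (e k (G i k))) = - (\<Sum>k\<in>B. \<Sum>i\<in>S. e k (e i (G i k)))"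
proof -
  have "(\<Sum>k\<in>B. \<Sum>i\<in>S. e k (e i (G i k))) = (\<Sum>i\<in>S. \<Sum>k\<in>B. e k (e i (G i k)))"
    by (rule sum.swap)
  also have "\<dots> = (\<Sum>i\<in>S. \<Sum>k\<in>B. - e i (e k (G i k)))"
  proof (intro sum.cong refl)
    fix i k assume i: "i \<in> S" and k: "k \<in> B"
    have "i \<noteq> k" using i k d by auto
    have ik: "i \<in> {1..n}" "k \<in> {1..n}" using i k S B by auto
    have "e i (e k (G i k)) + e k (e i (G i k)) = 0" using e_rel[OF ik, of "G i k"] \<open>i \<noteq> k\<close> by simp
    thus "e k (e i (G i k)) = - e i (e k (G i k))" by (metis add.inverse_unique)
  qed
  finally show ?thesis by (simp add: sum_negf)
qed

end



lemma TTX: "dunkl mu k (dunkl mu k (mulx i F)) - mulx i (dunkl mu k (dunkl mu k F))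
   = (if i = k then sc 2 (dunkl mu k F) else 0)"
proof (cases "i = k")
  case False thus ?thesis by (simp add: C3)
next
  case True thus ?thesis
    by (simp add: C3 lin_add[OF lin_T] lin_sc[OF lin_T] C5)
       (simp add: fun_eq_iff sc_def algebra_simps scaleR_2)
qed

lemma TXX: "dunkl mu k (mulx i (mulx i F)) - mulx i (mulx i (dunkl mu k F))
   = (if i = k then sc 2 (mulx k F) else 0)"
proof (cases "i = k")
  case False thus ?thesis by (simp add: C3)
next
  case True thus ?thesis
    by (simp add: C3 lin_add[OF lin_X] lin_sc[OF lin_X] C4)
       (simp add: fun_eq_iff sc_def algebra_simps scaleR_2)
qed

context cliff begin

lemma gen_sym:
  assumes S: "S \<subseteq> {1..n}" and L: "\<And>i. i \<in> S \<Longrightarrow> lin (P i)"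
    and CE: "\<And>i j G. i \<in> S \<Longrightarrow> j \<in> S \<Longrightarrow> P i (cl e j G) = cl e j (P i G)"
    and CP: "\<And>i j. i \<in> S \<Longrightarrow> j \<in> S \<Longrightarrow> P i (P j F) = P j (P i F)"
  shows "(\<Sum>k\<in>S. cl e k (P k (\<Sum>j\<in>S. cl e j (P j F)))) = - (\<Sum>k\<in>S. P k (P k F))"
proof (rule ext)
  fix a
  have step: "P k (\<Sum>j\<in>S. cl e j (P j F)) = (\<Sum>j\<in>S. cl e j (P k (P j F)))" if k: "k \<in> S" for k
  proof -
    have "P k (\<Sum>j\<in>S. cl e j (P j F)) = (\<Sum>j\<in>S. P k (cl e j (P j F)))" by (rule lin_sum[OF L[OF k]])
    also have "\<dots> = (\<Sum>j\<in>S. cl e j (P k (P j F)))" by (rule sum.cong) (simp_all add: CE k)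
    finally show ?thesis .
  qed
  have "(\<Sum>k\<in>S. cl e k (P k (\<Sum>j\<in>S. cl e j (P j F)))) = (\<Sum>k\<in>S. cl e k (\<Sum>j\<in>S. cl e j (P k (P j F))))"
    by (rule sum.cong) (simp_all add: step)
  hence "(\<Sum>k\<in>S. cl e k (P k (\<Sum>j\<in>S. cl e j (P j F)))) a
      = (\<Sum>k\<in>S. e k (\<Sum>j\<in>S. e j (P k (P j F) a)))"
    by (simp add: sum_fun_apply cl_alt)
  also have "\<dots> = (\<Sum>k\<in>S. \<Sum>j\<in>S. e k (e j (P k (P j F) a)))"
    using S by (intro sum.cong refl) (simp add: linear_sum[OF e_lin] subset_iff)
  also have "\<dots> = - (\<Sum>k\<in>S. P k (P k F) a)"
    by (rule clif_sym[OF S]) (simp add: CP)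
  finally show "(\<Sum>k\<in>S. cl e k (P k (\<Sum>j\<in>S. cl e j (P j F)))) a = (- (\<Sum>k\<in>S. P k (P k F))) a"
    by (simp add: sum_fun_apply)
qed

lemma gen_anti:
  assumes S: "S \<subseteq> {1..n}" and B: "B \<subseteq> {1..n}" and d: "S \<inter> B = {}"
    and LP: "\<And>i. i \<in> S \<Longrightarrow> lin (P i)" and LQ: "\<And>k. k \<in> B \<Longrightarrow> lin (Q k)"
    and CEP: "\<And>i k G. i \<in> S \<Longrightarrow> k \<in> B \<Longrightarrow> P i (cl e k G) = cl e k (P i G)"
    and CEQ: "\<And>i k G. i \<in> S \<Longrightarrow> k \<in> B \<Longrightarrow> Q k (cl e i G) = cl e i (Q k G)"
    and CPQ: "\<And>i k. i \<in> S \<Longrightarrow> k \<in> B \<Longrightarrow> P i (Q k F) = Q k (P i F)"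
  shows "(\<Sum>i\<in>S. cl e i (P i (\<Sum>k\<in>B. cl e k (Q k F))))
       = - (\<Sum>k\<in>B. cl e k (Q k (\<Sum>i\<in>S. cl e i (P i F))))"
proof (rule ext)
  fix a
  have step: "P i (\<Sum>k\<in>B. cl e k (Q k F)) = (\<Sum>k\<in>B. cl e k (P i (Q k F)))" if i: "i \<in> S" for i
  proof -
    have "P i (\<Sum>k\<in>B. cl e k (Q k F)) = (\<Sum>k\<in>B. P i (cl e k (Q k F)))" by (rule lin_sum[OF LP[OF i]])
    also have "\<dots> = (\<Sum>k\<in>B. cl e k (P i (Q k F)))" by (rule sum.cong) (simp_all add: CEP i)
    finally show ?thesis .
  qed
  have step2: "Q k (\<Sum>i\<in>S. cl e i (P i F)) = (\<Sum>i\<in>S. cl e i (Q k (P i F)))" if k: "k \<in> B" for k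
  proof -
    have "Q k (\<Sum>i\<in>S. cl e i (P i F)) = (\<Sum>i\<in>S. Q k (cl e i (P i F)))" by (rule lin_sum[OF LQ[OF k]])
    also have "\<dots> = (\<Sum>i\<in>S. cl e i (Q k (P i F)))" by (rule sum.cong) (simp_all add: CEQ k)
    finally show ?thesis .
  qed
  have "(\<Sum>i\<in>S. cl e i (P i (\<Sum>k\<in>B. cl e k (Q k F)))) = (\<Sum>i\<in>S. cl e i (\<Sum>k\<in>B. cl e k (P i (Q k F))))"
    by (rule sum.cong) (simp_all add: step)
  hence "(\<Sum>i\<in>S. cl e i (P i (\<Sum>k\<in>B. cl e k (Q k F)))) a
      = (\<Sum>i\<in>S. e i (\<Sum>k\<in>B. e k (P i (Q k F) a)))"
    by (simp add: sum_fun_apply cl_alt)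
  also have "\<dots> = (\<Sum>i\<in>S. \<Sum>k\<in>B. e i (e k (P i (Q k F) a)))"
    using S by (intro sum.cong refl) (simp add: linear_sum[OF e_lin] subset_iff)
  also have "\<dots> = - (\<Sum>k\<in>B. \<Sum>i\<in>S. e k (e i (P i (Q k F) a)))"
    by (rule clif_anti[OF S B d])
  also have "\<dots> = - (\<Sum>k\<in>B. e k (\<Sum>i\<in>S. e i (Q k (P i F) a)))"
    using B by (intro arg_cong[where f=uminus] sum.cong refl) (simp add: linear_sum[OF e_lin] subset_iff CPQ)
  also have "\<dots> = (- (\<Sum>k\<in>B. cl e k (Q k (\<Sum>i\<in>S. cl e i (P i F))))) a"
  proof -
    have "(\<Sum>k\<in>B. cl e k (Q k (\<Sum>i\<in>S. cl e i (P i F)))) = (\<Sum>k\<in>B. cl e k (\<Sum>i\<in>S. cl e i (Q k (P i F))))"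
      by (rule sum.cong) (simp_all add: step2)
    thus ?thesis by (simp add: sum_fun_apply cl_alt)
  qed
  finally show "(\<Sum>i\<in>S. cl e i (P i (\<Sum>k\<in>B. cl e k (Q k F)))) a
     = (- (\<Sum>k\<in>B. cl e k (Q k (\<Sum>i\<in>S. cl e i (P i F))))) a" .
qed

end



context cliff begin

lemma push:
  assumes S: "S \<subseteq> {1..n}" and L: "lin P" and C: "\<And>i H. i \<in> S \<Longrightarrow> P (cl e i H) = cl e i (P H)"
  shows "P (\<Sum>i\<in>S. cl e i (G i)) = (\<Sum>i\<in>S. cl e i (P (G i)))"
  by (simp add: lin_sum[OF L]) (rule sum.cong, simp_all add: C)

lemma P1: "S \<subseteq> {1..n} \<Longrightarrow> DA e mu S (DA e mu S F) = - (\<Sum>k\<in>S. dunkl mu k (dunkl mu k F))"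
  unfolding DA_sum
  by (rule gen_sym[where P="\<lambda>k. dunkl mu k"]) (auto simp: lin_T E_T C2 subset_iff)

lemma P2: "S \<subseteq> {1..n} \<Longrightarrow> XA e S (XA e S F) = - (\<Sum>k\<in>S. mulx k (mulx k F))"
  unfolding XA_sum
  by (rule gen_sym[where P="\<lambda>k. mulx k"]) (auto simp: lin_X E_X C1 subset_iff)

lemma DD_anti: "S \<subseteq> {1..n} \<Longrightarrow> B \<subseteq> {1..n} \<Longrightarrow> S \<inter> B = {} \<Longrightarrow>
   DA e mu S (DA e mu B F) = - DA e mu B (DA e mu S F)"
  unfolding DA_sum
  by (rule gen_anti[where P="\<lambda>k. dunkl mu k" and Q="\<lambda>k. dunkl mu k"]) (auto simp: lin_T E_T C2 subset_iff)

lemma XD_anti: "S \<subseteq> {1..n} \<Longrightarrow> B \<subseteq> {1..n} \<Longrightarrow> S \<inter> B = {} \<Longrightarrow>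
   XA e S (DA e mu B F) = - DA e mu B (XA e S F)"
  unfolding DA_sum XA_sum
  by (rule gen_anti[where P="\<lambda>k. mulx k" and Q="\<lambda>k. dunkl mu k"]) (auto simp: lin_T lin_X E_T E_X C3 subset_iff)

lemma DX_anti: "S \<subseteq> {1..n} \<Longrightarrow> B \<subseteq> {1..n} \<Longrightarrow> S \<inter> B = {} \<Longrightarrow>
   DA e mu S (XA e B F) = - XA e B (DA e mu S F)"
  unfolding DA_sum XA_sum
  by (rule gen_anti[where Q="\<lambda>k. mulx k" and P="\<lambda>k. dunkl mu k"]) (auto simp: lin_T lin_X E_T E_X C3 subset_iff)

lemma XX_anti: "S \<subseteq> {1..n} \<Longrightarrow> B \<subseteq> {1..n} \<Longrightarrow> S \<inter> B = {} \<Longrightarrow>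
   XA e S (XA e B F) = - XA e B (XA e S F)"
  unfolding XA_sum
  by (rule gen_anti[where P="\<lambda>k. mulx k" and Q="\<lambda>k. mulx k"]) (auto simp: lin_X E_X C1 subset_iff)

end



context cliff begin

lemma P5:
  assumes S: "S \<subseteq> {1..n}"
  shows "XA e S (DA e mu S (DA e mu S F)) - DA e mu S (DA e mu S (XA e S F)) = sc 2 (DA e mu S F)"
proof -
  have fin: "finite S" using S finite_subset by blast
  have mem: "\<And>i. i \<in> S \<Longrightarrow> i \<in> {1..n}" using S by auto
  have a: "XA e S (DA e mu S (DA e mu S F))
      = - (\<Sum>k\<in>S. \<Sum>i\<in>S. cl e i (mulx i (dunkl mu k (dunkl mu k F))))"
    by (simp only: P1[OF S] lin_neg[OF lin_XA[OF S]] lin_sum[OF lin_XA[OF S]]) (simp add: XA_sum)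
  have b: "DA e mu S (DA e mu S (XA e S F))
      = - (\<Sum>k\<in>S. \<Sum>i\<in>S. cl e i (dunkl mu k (dunkl mu k (mulx i F))))"
  proof -
    have "\<And>k. dunkl mu k (dunkl mu k (XA e S F)) = (\<Sum>i\<in>S. cl e i (dunkl mu k (dunkl mu k (mulx i F))))"
    proof -
      have pT: "\<And>k G. dunkl mu k (\<Sum>i\<in>S. cl e i (G i)) = (\<Sum>i\<in>S. cl e i (dunkl mu k (G i)))"
        by (rule push[OF S lin_T]) (rule E_T[OF mem])
      fix k show "dunkl mu k (dunkl mu k (XA e S F)) = (\<Sum>i\<in>S. cl e i (dunkl mu k (dunkl mu k (mulx i F))))"
        unfolding XA_sum by (simp add: pT)
    qed
    thus ?thesis by (simp add: P1[OF S])
  qed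
  have c: "cl e i (dunkl mu k (dunkl mu k (mulx i F))) - cl e i (mulx i (dunkl mu k (dunkl mu k F)))
     = (if i = k then sc 2 (cl e k (dunkl mu k F)) else 0)" if i: "i \<in> S" for i k
  proof -
    have "cl e i (dunkl mu k (dunkl mu k (mulx i F))) - cl e i (mulx i (dunkl mu k (dunkl mu k F)))
        = cl e i (if i = k then sc 2 (dunkl mu k F) else 0)"
      by (simp add: lin_diff[OF lin_E[OF mem[OF i]], symmetric] TTX)
    thus ?thesis by (cases "k = i") (simp_all add: lin_sc[OF lin_E[OF mem[OF i]]] lin_zero[OF lin_E[OF mem[OF i]]])
  qed
  have "XA e S (DA e mu S (DA e mu S F)) - DA e mu S (DA e mu S (XA e S F))
      = (\<Sum>k\<in>S. \<Sum>i\<in>S. cl e i (dunkl mu k (dunkl mu k (mulx i F))) - cl e i (mulx i (dunkl mu k (dunkl mu k F))))"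
    by (simp add: a b sum_subtractf)
  also have "\<dots> = (\<Sum>k\<in>S. \<Sum>i\<in>S. if i = k then sc 2 (cl e k (dunkl mu k F)) else 0)"
    by (intro sum.cong refl) (simp add: c)
  also have "\<dots> = (\<Sum>k\<in>S. sc 2 (cl e k (dunkl mu k F)))"
    by (intro sum.cong refl) (simp add: fin)
  also have "\<dots> = sc 2 (DA e mu S F)"
    by (simp add: sc_sum DA_sum)
  finally show ?thesis .
qed

lemma P6:
  assumes S: "S \<subseteq> {1..n}"
  shows "DA e mu S (XA e S (XA e S F)) - XA e S (XA e S (DA e mu S F)) = - sc 2 (XA e S F)"
proof -
  have fin: "finite S" using S finite_subset by blast
  have mem: "\<And>i. i \<in> S \<Longrightarrow> i \<in> {1..n}" using S by auto
  have a: "DA e mu S (XA e S (XA e S F))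
      = - (\<Sum>k\<in>S. \<Sum>i\<in>S. cl e i (dunkl mu i (mulx k (mulx k F))))"
    by (simp only: P2[OF S] lin_neg[OF lin_DA[OF S]] lin_sum[OF lin_DA[OF S]]) (simp add: DA_sum)
  have b: "XA e S (XA e S (DA e mu S F))
      = - (\<Sum>k\<in>S. \<Sum>i\<in>S. cl e i (mulx k (mulx k (dunkl mu i F))))"
  proof -
    have "\<And>k. mulx k (mulx k (DA e mu S F)) = (\<Sum>i\<in>S. cl e i (mulx k (mulx k (dunkl mu i F))))"
    proof -
      have pT: "\<And>k G. mulx k (\<Sum>i\<in>S. cl e i (G i)) = (\<Sum>i\<in>S. cl e i (mulx k (G i)))"
        by (rule push[OF S lin_X]) (rule E_X[OF mem])
      fix k show "mulx k (mulx k (DA e mu S F)) = (\<Sum>i\<in>S. cl e i (mulx k (mulx k (dunkl mu i F))))"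
        unfolding DA_sum by (simp add: pT)
    qed
    thus ?thesis by (simp add: P2[OF S])
  qed
  have c: "cl e i (dunkl mu i (mulx k (mulx k F))) - cl e i (mulx k (mulx k (dunkl mu i F)))
     = (if k = i then sc 2 (cl e i (mulx i F)) else 0)" if i: "i \<in> S" for i k
  proof -
    have "cl e i (dunkl mu i (mulx k (mulx k F))) - cl e i (mulx k (mulx k (dunkl mu i F)))
        = cl e i (if k = i then sc 2 (mulx i F) else 0)"
      by (simp add: lin_diff[OF lin_E[OF mem[OF i]], symmetric] TXX)
    thus ?thesis by (cases "k = i") (simp_all add: lin_sc[OF lin_E[OF mem[OF i]]] lin_zero[OF lin_E[OF mem[OF i]]])
  qed
  have "DA e mu S (XA e S (XA e S F)) - XA e S (XA e S (DA e mu S F))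
      = - (\<Sum>k\<in>S. \<Sum>i\<in>S. cl e i (dunkl mu i (mulx k (mulx k F))) - cl e i (mulx k (mulx k (dunkl mu i F))))"
    by (simp add: a b sum_subtractf)
  also have "\<dots> = - (\<Sum>k\<in>S. \<Sum>i\<in>S. if k = i then sc 2 (cl e i (mulx i F)) else 0)"
    by (intro arg_cong[where f=uminus] sum.cong refl) (simp add: c)
  also have "\<dots> = - (\<Sum>k\<in>S. sc 2 (cl e k (mulx k F)))"
    by (intro arg_cong[where f=uminus] sum.cong refl) (simp add: fin)
  also have "\<dots> = - sc 2 (XA e S F)"
    by (simp add: sc_sum XA_sum)
  finally show ?thesis .
qed

end



context cliff begin

lemma AS_D:
  assumes S: "S \<subseteq> {1..n}"
  shows "SA e mu S (DA e mu S F) = - DA e mu S (SA e mu S F)"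
proof -
  note lD = lin_DA[OF S, of mu] and lX = lin_XA[OF S]
  have h: "XA e S (DA e mu S (DA e mu S F)) = DA e mu S (DA e mu S (XA e S F)) + sc 2 (DA e mu S F)"
    using P5[OF S, of mu F] by (simp add: diff_eq_eq add.commute)
  show ?thesis
    by (simp add: SA_alt lin_sc[OF lD] lin_diff[OF lD] h) (simp add: fun_eq_iff sc_def algebra_simps, simp add: scaleR_add_left[symmetric])
qed

lemma AS_X:
  assumes S: "S \<subseteq> {1..n}"
  shows "SA e mu S (XA e S F) = - XA e S (SA e mu S F)"
proof -
  note lD = lin_DA[OF S, of mu] and lX = lin_XA[OF S]
  have h: "DA e mu S (XA e S (XA e S F)) = XA e S (XA e S (DA e mu S F)) - sc 2 (XA e S F)"
    using P6[OF S, of mu F] by (simp add: diff_eq_eq add.commute)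
  show ?thesis
    by (simp add: SA_alt lin_sc[OF lX] lin_diff[OF lX] h) (simp add: fun_eq_iff sc_def algebra_simps, simp add: scaleR_add_left[symmetric])
qed

lemma SD_B:
  assumes S: "S \<subseteq> {1..n}" and B: "B \<subseteq> {1..n}" and d: "S \<inter> B = {}"
  shows "SA e mu S (DA e mu B F) = DA e mu B (SA e mu S F)"
proof -
  note lDS = lin_DA[OF S, of mu] and lXS = lin_XA[OF S] and lDB = lin_DA[OF B, of mu]
  have 1: "XA e S (DA e mu S (DA e mu B F)) = DA e mu B (XA e S (DA e mu S F))"
    by (simp add: DD_anti[OF S B d] lin_neg[OF lXS] XD_anti[OF S B d])
  have 2: "DA e mu S (XA e S (DA e mu B F)) = DA e mu B (DA e mu S (XA e S F))"
    by (simp add: XD_anti[OF S B d] lin_neg[OF lDS] DD_anti[OF S B d])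
  show ?thesis
    by (simp add: SA_alt 1 2 lin_sc[OF lDB] lin_diff[OF lDB])
qed

lemma SX_B:
  assumes S: "S \<subseteq> {1..n}" and B: "B \<subseteq> {1..n}" and d: "S \<inter> B = {}"
  shows "SA e mu S (XA e B F) = XA e B (SA e mu S F)"
proof -
  note lDS = lin_DA[OF S, of mu] and lXS = lin_XA[OF S] and lXB = lin_XA[OF B]
  have 1: "XA e S (DA e mu S (XA e B F)) = XA e B (XA e S (DA e mu S F))"
    by (simp add: DX_anti[OF S B d] lin_neg[OF lXS] XX_anti[OF S B d])
  have 2: "DA e mu S (XA e S (XA e B F)) = XA e B (DA e mu S (XA e S F))"
    by (simp add: XX_anti[OF S B d] lin_neg[OF lDS] DX_anti[OF S B d])
  show ?thesis
    by (simp add: SA_alt 1 2 lin_sc[OF lXB] lin_diff[OF lXB])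
qed

lemma RA_DA:
  assumes S: "S \<subseteq> {1..n}" and f: "finite S'"
  shows "S \<subseteq> S' \<Longrightarrow> reflA S' (DA e mu S F) = - DA e mu S (reflA S' F)"
    and "S \<inter> S' = {} \<Longrightarrow> reflA S' (DA e mu S F) = DA e mu S (reflA S' F)"
proof -
  have mem: "\<And>i. i \<in> S \<Longrightarrow> i \<in> {1..n}" using S by auto
  have p: "reflA S' (DA e mu S F) = (\<Sum>i\<in>S. cl e i (reflA S' (dunkl mu i F)))"
    unfolding DA_sum by (rule push[OF S lin_RA]) (rule E_RA[OF mem])
  show "S \<subseteq> S' \<Longrightarrow> reflA S' (DA e mu S F) = - DA e mu S (reflA S' F)"
  proof -
    assume s: "S \<subseteq> S'"
    have "(\<Sum>i\<in>S. cl e i (reflA S' (dunkl mu i F))) = (\<Sum>i\<in>S. - cl e i (dunkl mu i (reflA S' F)))"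
      by (rule sum.cong) (use s in \<open>auto simp: RA_T[OF f] lin_neg[OF lin_E[OF mem]]\<close>)
    thus ?thesis using p by (simp add: DA_sum sum_negf)
  qed
  show "S \<inter> S' = {} \<Longrightarrow> reflA S' (DA e mu S F) = DA e mu S (reflA S' F)"
  proof -
    assume s: "S \<inter> S' = {}"
    have "(\<Sum>i\<in>S. cl e i (reflA S' (dunkl mu i F))) = (\<Sum>i\<in>S. cl e i (dunkl mu i (reflA S' F)))"
      by (rule sum.cong) (use s in \<open>auto simp: RA_T[OF f]\<close>)
    thus ?thesis using p by (simp add: DA_sum)
  qed
qed

lemma RA_XA:
  assumes S: "S \<subseteq> {1..n}" and f: "finite S'"
  shows "S \<subseteq> S' \<Longrightarrow> reflA S' (XA e S F) = - XA e S (reflA S' F)"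
    and "S \<inter> S' = {} \<Longrightarrow> reflA S' (XA e S F) = XA e S (reflA S' F)"
proof -
  have mem: "\<And>i. i \<in> S \<Longrightarrow> i \<in> {1..n}" using S by auto
  have p: "reflA S' (XA e S F) = (\<Sum>i\<in>S. cl e i (reflA S' (mulx i F)))"
    unfolding XA_sum by (rule push[OF S lin_RA]) (rule E_RA[OF mem])
  show "S \<subseteq> S' \<Longrightarrow> reflA S' (XA e S F) = - XA e S (reflA S' F)"
  proof -
    assume s: "S \<subseteq> S'"
    have "(\<Sum>i\<in>S. cl e i (reflA S' (mulx i F))) = (\<Sum>i\<in>S. - cl e i (mulx i (reflA S' F)))"
      by (rule sum.cong) (use s in \<open>auto simp: RA_X[OF f] lin_neg[OF lin_E[OF mem]]\<close>)
    thus ?thesis using p by (simp add: XA_sum sum_negf)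
  qed
  show "S \<inter> S' = {} \<Longrightarrow> reflA S' (XA e S F) = XA e S (reflA S' F)"
  proof -
    assume s: "S \<inter> S' = {}"
    have "(\<Sum>i\<in>S. cl e i (reflA S' (mulx i F))) = (\<Sum>i\<in>S. cl e i (mulx i (reflA S' F)))"
      by (rule sum.cong) (use s in \<open>auto simp: RA_X[OF f]\<close>)
    thus ?thesis using p by (simp add: XA_sum)
  qed
qed

end



context cliff begin

lemma RA_SA:
  assumes S: "S \<subseteq> {1..n}" and f: "finite S'" and s: "S \<subseteq> S'"
  shows "reflA S' (SA e mu S G) = SA e mu S (reflA S' G)"
  by (simp add: SA_alt lin_sc[OF lin_RA] lin_diff[OF lin_RA] RA_DA(1)[OF S f s] RA_XA(1)[OF S f s]
      lin_neg[OF lin_XA[OF S]] lin_neg[OF lin_DA[OF S]])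

lemma split_N:
  assumes A: "A \<subseteq> {1..n}"
  shows "DA e mu {1..n} G = DA e mu A G + DA e mu ({1..n} - A) G"
    and "XA e {1..n} G = XA e A G + XA e ({1..n} - A) G"
proof -
  have N: "{1..n} = A \<union> ({1..n} - A)" using A by auto
  have fA: "finite A" using A finite_subset by blast
  show "DA e mu {1..n} G = DA e mu A G + DA e mu ({1..n} - A) G"
    unfolding DA_sum by (subst N) (rule sum.union_disjoint, use fA in auto)
  show "XA e {1..n} G = XA e A G + XA e ({1..n} - A) G"
    unfolding XA_sum by (subst N) (rule sum.union_disjoint, use fA in auto)
qed

lemma main_D:
  assumes A: "A \<subseteq> {1..n}"
  shows "GammaA e mu A (DA e mu {1..n} F) = DA e mu {1..n} (GammaA e mu A F)"
proof -
  define B where "B = {1..n} - A"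
  have B: "B \<subseteq> {1..n}" and d: "A \<inter> B = {}" and dB: "B \<inter> A = {}" unfolding B_def by auto
  have fA: "finite A" using A finite_subset by blast
  have 1: "GammaA e mu A (DA e mu A F) = DA e mu A (GammaA e mu A F)"
    unfolding GammaA_def
    by (simp add: RA_DA(1)[OF A fA] lin_neg[OF lin_SA[OF A]] AS_D[OF A])
  have 2: "GammaA e mu A (DA e mu B F) = DA e mu B (GammaA e mu A F)"
    unfolding GammaA_def
    by (simp add: RA_DA(2)[OF B fA dB] SD_B[OF A B d])
  show ?thesis
    by (simp only: split_N(1)[OF A, of mu F] split_N(1)[OF A, of mu "GammaA e mu A F"]
        lin_add[OF lin_G[OF A]] 1 2[unfolded B_def])
qed

lemma main_X:
  assumes A: "A \<subseteq> {1..n}"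
  shows "GammaA e mu A (XA e {1..n} F) = XA e {1..n} (GammaA e mu A F)"
proof -
  define B where "B = {1..n} - A"
  have B: "B \<subseteq> {1..n}" and d: "A \<inter> B = {}" and dB: "B \<inter> A = {}" unfolding B_def by auto
  have fA: "finite A" using A finite_subset by blast
  have 1: "GammaA e mu A (XA e A F) = XA e A (GammaA e mu A F)"
    unfolding GammaA_def
    by (simp add: RA_XA(1)[OF A fA] lin_neg[OF lin_SA[OF A]] AS_X[OF A])
  have 2: "GammaA e mu A (XA e B F) = XA e B (GammaA e mu A F)"
    unfolding GammaA_def
    by (simp add: RA_XA(2)[OF B fA dB] SX_B[OF A B d])
  show ?thesis
    by (simp only: split_N(2)[OF A, of F] split_N(2)[OF A, of "GammaA e mu A F"]
        lin_add[OF lin_G[OF A]] 1 2[unfolded B_def])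
qed

lemma main_G:
  assumes A: "A \<subseteq> {1..n}"
  shows "GammaA e mu A (GammaA e mu {1..n} F) = GammaA e mu {1..n} (GammaA e mu A F)"
proof -
  have N: "{1..n} \<subseteq> {1..n}" by simp
  have fA: "finite A" using A finite_subset by blast
  have r: "GammaA e mu A (reflA {1..n} G) = reflA {1..n} (GammaA e mu A G)" for G
  proof -
    have "GammaA e mu A (reflA {1..n} G) = SA e mu A (reflA {1..n} (reflA A G))"
      unfolding GammaA_def by (simp only: RA_RA[of A])
    also have "\<dots> = reflA {1..n} (SA e mu A (reflA A G))"
      by (rule RA_SA[OF A finite_atLeastAtMost A, symmetric])
    finally show ?thesis unfolding GammaA_def .
  qed
  have "GammaA e mu A (GammaA e mu {1..n} F)
     = GammaA e mu A (SA e mu {1..n} (reflA {1..n} F))" by (simp add: GammaA_def)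
  also have "\<dots> = SA e mu {1..n} (GammaA e mu A (reflA {1..n} F))"
    by (simp only: SA_alt lin_sc[OF lin_G[OF A]] lin_diff[OF lin_G[OF A]] main_D[OF A] main_X[OF A])
  also have "\<dots> = GammaA e mu {1..n} (GammaA e mu A F)"
    by (simp only: r GammaA_def[of e mu "{1..n}"])
  finally show ?thesis .
qed

end

theorem lemma1:
  fixes n :: nat and mu :: "nat \<Rightarrow> real" and e :: "nat \<Rightarrow> 'v::real_vector \<Rightarrow> 'v"
    and A :: "nat set" and F :: "'v pv"
  assumes "n \<ge> 1"
    and "\<forall>i\<in>{1..n}. mu i > 0"
    and "clifford_module n e"
    and "A \<subseteq> {1..n}"
    and "is_pv n F"
  shows "commut (GammaA e mu A) (DA e mu {1..n}) F = 0
       \<and> commut (GammaA e mu A) (XA e {1..n}) F = 0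
       \<and> commut (GammaA e mu A) (GammaA e mu {1..n}) F = 0"
proof -
  interpret cliff n e by unfold_locales (rule assms(3))
  show ?thesis
    using main_D[OF assms(4), of mu F] main_X[OF assms(4), of mu F] main_G[OF assms(4), of mu F]
    by (simp add: commut_def fun_eq_iff)
qed


end
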